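(* Let $q=2^m$ with $m\ge 4$ even. Then the trace code $\mathrm{Tr}_{q^2/q}(\mathcal C_{\{3,5\}})$ has parameters $[q+1,4,q-4]_q$.
   Context: Let $U_{q+1}$ be the set of $(q+1)$-th roots of unity in $\mathrm{GF}(q^2)$; coordinates are indexed by $U_{q+1}$. Define $\mathcal C_{\{3,5\}}=\{(a_3u^3+a_{q-2}u^{q-2}+a_5u^5+a_{q-4}u^{q-4})_{u\in U_{q+1}}: a_3,a_{q-2},a_5,a_{q-4}\in\mathrm{GF}(q^2)\}$, and $\mathrm{Tr}_{q^2/q}(\mathcal C)=\{(\mathrm{Tr}_{q^2/q}(c_u))_{u\in U_{q+1}}:(c_u)\in\mathcal C\}$, where $\mathrm{Tr}_{q^2/q}(x)=x+x^q$. $[n,k,d]_q$ denotes a linear code over $\mathrm{GF}(q)$ of length $n$, dimension $k$, minimum distance $d$. *)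

theory Defs
  imports Main
begin

text \<open>Ambient field: a finite field of type 'a with q^2 elements, playing GF(q^2).
  Vectors indexed by the set of (q+1)-th roots of unity are functions 'a => 'a
  that vanish outside the index set.\<close>

definition roots_U :: "nat \<Rightarrow> 'a::field set" where
  "roots_U q = {u. u ^ (q + 1) = 1}"

definition subfield_GF :: "nat \<Rightarrow> 'a::field set" where
  "subfield_GF q = {x. x ^ q = x}"

definition trace_rel :: "nat \<Rightarrow> 'a::field \<Rightarrow> 'a" where
  "trace_rel q x = x + x ^ q"

definition code_C35 :: "nat \<Rightarrow> ('a::field \<Rightarrow> 'a) set" where
  "code_C35 q = {(\<lambda>u. if u \<in> roots_U q then
        a3 * u ^ 3 + aq2 * u ^ (q - 2) + a5 * u ^ 5 + aq4 * u ^ (q - 4) else 0)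
      | a3 aq2 a5 aq4. True}"

definition trace_code :: "nat \<Rightarrow> ('a::field \<Rightarrow> 'a) set \<Rightarrow> ('a \<Rightarrow> 'a) set" where
  "trace_code q C = {(\<lambda>u. if u \<in> roots_U q then trace_rel q (c u) else 0) | c. c \<in> C}"

definition hamming_weight :: "'b set \<Rightarrow> ('b \<Rightarrow> 'a::zero) \<Rightarrow> nat" where
  "hamming_weight I c = card {i \<in> I. c i \<noteq> 0}"

definition linear_code_params ::
  "'a::field set \<Rightarrow> 'b set \<Rightarrow> ('b \<Rightarrow> 'a) set \<Rightarrow> nat \<Rightarrow> nat \<Rightarrow> nat \<Rightarrow> bool" where
  "linear_code_params K I C n k d \<longleftrightarrow>
     (\<forall>c\<in>C. \<forall>i. (i \<in> I \<longrightarrow> c i \<in> K) \<and> (i \<notin> I \<longrightarrow> c i = 0)) \<and>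
     (\<lambda>_. 0) \<in> C \<and>
     (\<forall>x\<in>C. \<forall>y\<in>C. (\<lambda>i. x i + y i) \<in> C) \<and>
     (\<forall>a\<in>K. \<forall>x\<in>C. (\<lambda>i. a * x i) \<in> C) \<and>
     finite I \<and> card I = n \<and>
     finite C \<and> card C = card K ^ k \<and>
     d = Min {hamming_weight I c | c. c \<in> C \<and> c \<noteq> (\<lambda>_. 0)}"

end

theory Submission imports Defs "HOL-Computational_Algebra.Polynomial"
begin

lemma fermat_nz:
  fixes x :: "'a::{finite,field}"
  assumes "x \<noteq> 0"
  shows "x ^ (card (UNIV::'a set) - 1) = 1"
proof -
  let ?S = "UNIV - {0::'a}"
  have cS: "card ?S = card (UNIV::'a set) - 1" by (simp add: card_Diff_subset)
  have inj: "inj_on (\<lambda>a. x * a) ?S" using assms by (auto simp: inj_on_def)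
  have im: "(\<lambda>a. x * a) ` ?S = ?S"
  proof
    show "(\<lambda>a. x * a) ` ?S \<subseteq> ?S" using assms by auto
    show "?S \<subseteq> (\<lambda>a. x * a) ` ?S"
    proof
      fix b assume "b \<in> ?S"
      then have "b = x * (b / x)" "b / x \<in> ?S" using assms by auto
      then show "b \<in> (\<lambda>a. x * a) ` ?S" by blast
    qed
  qed
  have "prod (\<lambda>a. a) ?S = prod (\<lambda>a. a) ((\<lambda>a. x * a) ` ?S)" using im by simp
  also have "\<dots> = prod (\<lambda>a. x * a) ?S" using prod.reindex[OF inj] by simp
  also have "\<dots> = x ^ card ?S * prod (\<lambda>a. a) ?S" by (simp add: prod.distrib)
  finally have "1 * prod (\<lambda>a. a) ?S = x ^ card ?S * prod (\<lambda>a. a) ?S" by simp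
  moreover have "prod (\<lambda>a. a) ?S \<noteq> 0" by simp
  ultimately have "x ^ card ?S = 1" by (metis mult_cancel_right)
  then show ?thesis using cS by simp
qed

lemma fermat_all:
  fixes x :: "'a::{finite,field}"
  shows "x ^ card (UNIV::'a set) = x"
proof (cases "x = 0")
  case True
  have "0 < card (UNIV::'a set)" by (simp add: card_gt_0_iff)
  then show ?thesis using True by (simp add: zero_power)
next
  case False
  have "card (UNIV::'a set) = Suc (card (UNIV::'a set) - 1)"
    by (simp add: card_gt_0_iff Suc_diff_1)
  then have "x ^ card (UNIV::'a set) = x * x ^ (card (UNIV::'a set) - 1)"
    by (metis power_Suc)
  then show ?thesis using fermat_nz[OF False] by simp
qed

lemma char2:
  fixes m :: nat
  assumes "card (UNIV :: 'a::{finite,field} set) = 2 ^ m" and "m \<ge> 1"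
  shows "(2::'a) = 0"
proof -
  have "(-1::'a) ^ (2^m - 1) = 1" using fermat_nz[of "-1::'a"] assms by simp
  moreover have "odd (2^m - 1::nat)" using assms by (simp add: Suc_le_eq)
  ultimately have "(-1::'a) = 1" by simp
  then have "(1::'a) + 1 = 0" by (metis add.right_inverse)
  then show ?thesis by simp
qed

lemma frob2:
  fixes a b :: "'a::field"
  assumes "(2::'a) = 0"
  shows "(a + b) ^ (2 ^ k) = a ^ (2 ^ k) + b ^ (2 ^ k)"
proof (induction k)
  case 0 then show ?case by simp
next
  case (Suc k)
  have sq: "(x + y) ^ 2 = x ^ 2 + y ^ 2" for x y :: 'a
  proof -
    have "(x + y) ^ 2 = x ^ 2 + y ^ 2 + 2 * x * y" by (simp add: power2_eq_square algebra_simps)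
    then show ?thesis using assms by simp
  qed
  have "(a + b) ^ (2 ^ Suc k) = ((a + b) ^ (2 ^ k)) ^ 2" by (simp add: power_mult[symmetric] mult.commute)
  also have "\<dots> = (a ^ (2 ^ k)) ^ 2 + (b ^ (2 ^ k)) ^ 2" using Suc sq by simp
  also have "\<dots> = a ^ (2 ^ Suc k) + b ^ (2 ^ Suc k)" by (simp add: power_mult[symmetric] mult.commute)
  finally show ?case .
qed

lemma card_fibres:
  assumes "finite A" "finite B" "f ` A \<subseteq> B" "\<And>b. b \<in> B \<Longrightarrow> card {a\<in>A. f a = b} \<le> k"
  shows "card A \<le> k * card B"
proof -
  have "A = (\<Union>b\<in>B. {a\<in>A. f a = b})" using assms(3) by auto
  then have "card A \<le> (\<Sum>b\<in>B. card {a\<in>A. f a = b})" using card_UN_le[OF assms(2)] by metis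
  also have "\<dots> \<le> (\<Sum>b\<in>B. k)" by (rule sum_mono) (use assms(4) in auto)
  finally show ?thesis by (simp add: mult.commute)
qed

lemma pow_eq_card:
  fixes c :: "'a::field"
  assumes "n \<ge> 1"
  shows "card {x. x ^ n = c} \<le> n"
proof -
  let ?p = "monom 1 n + [:-c:]"
  have deg: "degree ?p = n" using assms by (subst degree_add_eq_left) (auto simp: degree_monom_eq)
  then have "?p \<noteq> 0" using assms by auto
  then have "card {x. poly ?p x = 0} \<le> n" using card_poly_roots_bound deg by metis
  moreover have "{x. poly ?p x = 0} = {x. x ^ n = c}" by (auto simp: poly_monom)
  ultimately show ?thesis by simp
qed


lemma I1: fixes w x :: "'a::comm_ring_1" shows
 "(w^2*x^2+w)^2 + (x^2+x+1)*(w^2*x^2+w) + (x^2+x+1)^2 - x*(w^2*x^2+w) = 2*(x + 2*x^2 + x^3) + (w^2+w+1)*(1 - x^2 + x^4 + 2*w*x^2 - w*x^4 + w^2*x^4)"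
  by (simp add: algebra_simps power2_eq_square power3_eq_cube eval_nat_numeral)
lemma I2: fixes w x xq :: "'a::comm_ring_1" shows
 "(w^2*x^2+w)*(w^2*xq^2+w) - (x^2+x+1)*(xq^2+xq+1) = 2*(-2 - xq - x) + (w^2+w+1)*(1 - xq^2 - x^2 + w*xq^2 + w*x^2 - w*x^2*xq^2 + w^2*x^2*xq^2) + (x*xq - 1)*(-2 - xq - x - x*xq + w + w*x*xq)"
  by (simp add: algebra_simps power2_eq_square power3_eq_cube eval_nat_numeral)

context
  fixes q m :: nat
  assumes cardq: "card (UNIV::'a::{finite,field} set) = q^2"
    and qm: "q = 2^m" and m4: "m \<ge> 4" and evm: "even m"
begin

lemma q16: "q \<ge> 16"
proof -
  have "(2::nat)^4 \<le> 2^m" using m4 by (rule power_increasing) simp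
  then show ?thesis using qm by simp
qed

lemma two0: "(2::'a) = 0"
  using char2[of "2*m"] cardq qm m4 by (simp add: power_mult[symmetric] mult.commute)

lemma neg_id: "- (z::'a) = z"
proof -
  have "z + z = 2 * z" by simp
  then have "z + z = 0" using two0 by simp
  then show ?thesis by (metis add_eq_0_iff)
qed

lemma eq_iff_add0: "((a::'a) = b) \<longleftrightarrow> a + b = 0"
  by (metis add_eq_0_iff neg_id)

lemma add0_iff: "((a::'a) + b = 0) \<longleftrightarrow> a = b"
  using eq_iff_add0 by blast

lemma frobq: "((a::'a) + b) ^ q = a ^ q + b ^ q"
  using frob2[OF two0] qm by simp

lemma frobqq: "((a::'a) ^ q) ^ q = a"
  using fermat_all[of a] cardq by (simp add: power_mult[symmetric] power2_eq_square)

lemma cardK: "card (subfield_GF q :: 'a set) = q"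
proof -
  let ?K = "subfield_GF q :: 'a set"
  let ?p = "monom (1::'a) q + [:0, -1:]"
  have deg: "degree ?p = q" using q16 by (subst degree_add_eq_left) (auto simp: degree_monom_eq)
  then have "?p \<noteq> 0" using q16 by auto
  then have "card {x. poly ?p x = 0} \<le> q" using card_poly_roots_bound deg by metis
  moreover have "{x. poly ?p x = 0} = ?K" by (auto simp: poly_monom subfield_GF_def)
  ultimately have up: "card ?K \<le> q" by simp
  let ?A = "UNIV - {0::'a}" and ?B = "?K - {0}"
  have "card ?A \<le> (q+1) * card ?B"
  proof (rule card_fibres[where f = "\<lambda>x. x^(q+1)"])
    show "(\<lambda>x. x^(q+1)) ` ?A \<subseteq> ?B"
    proof
      fix y assume "y \<in> (\<lambda>x. x^(q+1)) ` ?A"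
      then obtain x where x: "x \<noteq> 0" "y = x^(q+1)" by auto
      have "y ^ q = (x^q)^q * x^q" using x by (simp add: power_mult_distrib power_mult[symmetric] mult.commute)
      also have "\<dots> = y" using x frobqq by (simp add: mult.commute)
      finally show "y \<in> ?B" using x by (auto simp: subfield_GF_def)
    qed
    fix b assume "b \<in> ?B"
    have "card {a \<in> ?A. a^(q+1) = b} \<le> card {a. a^(q+1) = b}"
      by (rule card_mono) (auto intro: finite_subset)
    also have "\<dots> \<le> q + 1" by (rule pow_eq_card) simp
    finally show "card {a \<in> ?A. a^(q+1) = b} \<le> q + 1" .
  qed auto
  moreover have "card ?A = (q+1)*(q-1)" using cardq q16
    by (simp add: card_Diff_subset power2_eq_square algebra_simps)
  ultimately have "(q+1)*(q-1) \<le> (q+1)*card ?B" by (simp only:)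
  then have "q - 1 \<le> card ?B" by (simp only: mult_le_cancel1)
  moreover have "0 \<in> ?K" using q16 by (simp add: subfield_GF_def)
  moreover have "card ?B = card ?K - 1" using calculation(2) by (simp add: card_Diff_subset)
  ultimately show ?thesis using up q16 by linarith
qed

lemma cardU: "card (roots_U q :: 'a set) = q + 1"
proof -
  let ?U = "roots_U q :: 'a set"
  have up: "card ?U \<le> q + 1" unfolding roots_U_def by (rule pow_eq_card) simp
  let ?A = "UNIV - {0::'a}"
  have "card ?A \<le> (q-1) * card ?U"
  proof (rule card_fibres[where f = "\<lambda>x. x^(q-1)"])
    show "(\<lambda>x. x^(q-1)) ` ?A \<subseteq> ?U"
    proof
      fix y assume "y \<in> (\<lambda>x. x^(q-1)) ` ?A"
      then obtain x where x: "x \<noteq> 0" "y = x^(q-1)" by auto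
      have "(q-1)*(q+1) = card (UNIV::'a set) - 1" using cardq q16
        by (simp add: power2_eq_square algebra_simps)
      moreover have "y ^ (q+1) = x^((q-1)*(q+1))" using x by (simp only: power_mult)
      ultimately have "y ^ (q+1) = 1" using x fermat_nz[of x] by simp
      then show "y \<in> ?U" by (simp add: roots_U_def)
    qed
    fix b assume "b \<in> ?U"
    have "card {a \<in> ?A. a^(q-1) = b} \<le> card {a. a^(q-1) = b}"
      by (rule card_mono) (auto intro: finite_subset)
    also have "\<dots> \<le> q - 1" by (rule pow_eq_card) (use q16 in simp)
    finally show "card {a \<in> ?A. a^(q-1) = b} \<le> q - 1" .
  qed auto
  moreover have "card ?A = (q-1)*(q+1)" using cardq q16
    by (simp add: card_Diff_subset power2_eq_square algebra_simps)
  ultimately have "(q-1)*(q+1) \<le> (q-1)*card ?U" by (simp only:)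
  then have "q + 1 \<le> card ?U" using q16 by (simp only: mult_le_cancel1)
  then show ?thesis using up by simp
qed


lemma frob_mult: "((a::'a) * b) ^ q = a^q * b^q" by (simp add: power_mult_distrib)

lemma U_inv: assumes "(u::'a) \<in> roots_U q" shows "u \<noteq> 0" "u ^ q = inverse u"
proof -
  have "u * u ^ q = 1" using assms by (simp add: roots_U_def mult.commute)
  then show "u \<noteq> 0" by auto
  show "u ^ q = inverse u" using \<open>u * u ^ q = 1\<close> by (metis inverse_unique)
qed

lemma val_red:
  assumes u: "(u::'a) \<in> roots_U q"
  shows "trace_rel q (a3 * u ^ 3 + aq2 * u ^ (q - 2) + a5 * u ^ 5 + aq4 * u ^ (q - 4))
       = trace_rel q ((a3 + aq2^q) * u ^ 3 + (a5 + aq4^q) * u ^ 5)"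
proof -
  have u0: "u \<noteq> 0" and uq: "u ^ q = inverse u" using U_inv[OF u] by auto
  have e2: "u ^ (q - 2) = inverse u ^ 3"
  proof -
    have "q - 2 + 2 = q" using q16 by simp
    then have h: "u ^ (q - 2) * u ^ 2 = u ^ q" by (metis power_add)
    have "u ^ (q - 2) = u ^ q / u ^ 2" using h u0 by (simp add: eq_divide_eq)
    also have "\<dots> = inverse (u * u ^ 2)" using uq by (simp add: divide_inverse inverse_mult_distrib mult.commute)
    also have "\<dots> = inverse u ^ 3" by (simp add: power_inverse[symmetric] power_Suc[symmetric] del: power_Suc)
    finally show ?thesis .
  qed
  have e4: "u ^ (q - 4) = inverse u ^ 5"
  proof -
    have "q - 4 + 4 = q" using q16 by simp
    then have h: "u ^ (q - 4) * u ^ 4 = u ^ q" by (metis power_add)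
    have "u ^ (q - 4) = u ^ q / u ^ 4" using h u0 by (simp add: eq_divide_eq)
    also have "\<dots> = inverse (u * u ^ 4)" using uq by (simp add: divide_inverse inverse_mult_distrib mult.commute)
    also have "\<dots> = inverse u ^ 5" by (simp add: power_inverse[symmetric] power_Suc[symmetric] del: power_Suc)
    finally show ?thesis .
  qed
  have pq: "(u ^ k) ^ q = inverse u ^ k" for k
    using uq by (metis power_mult mult.commute)
  have piq: "(inverse u ^ k) ^ q = u ^ k" for k
    using uq by (metis power_mult mult.commute power_inverse inverse_inverse_eq)
  show ?thesis
    unfolding trace_rel_def e2 e4
    by (simp add: frobq frob_mult pq piq frobqq algebra_simps)
qed

definition W :: "'a \<Rightarrow> 'a \<Rightarrow> 'a \<Rightarrow> 'a" where
  "W A B = (\<lambda>u. if u \<in> roots_U q then trace_rel q (A * u^3 + B * u^5) else 0)"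

lemma code_eq: "trace_code q (code_C35 q) = {W A B | A B. True}"
proof
  show "trace_code q (code_C35 q) \<subseteq> {W A B | A B. True}"
  proof
    fix c :: "'a \<Rightarrow> 'a" assume "c \<in> trace_code q (code_C35 q)"
    then obtain a3 aq2 a5 aq4 :: 'a where c: "c = (\<lambda>u. if u \<in> roots_U q then trace_rel q
        (if u \<in> roots_U q then a3 * u ^ 3 + aq2 * u ^ (q - 2) + a5 * u ^ 5 + aq4 * u ^ (q - 4) else 0) else 0)"
      unfolding trace_code_def code_C35_def by auto
    have "c = W (a3 + aq2^q) (a5 + aq4^q)"
      unfolding c W_def by (rule ext) (simp add: val_red)
    then show "c \<in> {W A B | A B. True}" by blast
  qed
  show "{W A B | A B. True} \<subseteq> trace_code q (code_C35 q)"
  proof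
    fix c :: "'a \<Rightarrow> 'a" assume "c \<in> {W A B | A B. True}"
    then obtain A B where c: "c = W A B" by auto
    let ?d = "(\<lambda>u. if u \<in> roots_U q then A * u ^ 3 + 0 * u ^ (q - 2) + B * u ^ 5 + 0 * u ^ (q - 4) else 0)"
    have d1: "?d \<in> code_C35 q" unfolding code_C35_def by blast
    have d2: "c = (\<lambda>u. if u \<in> roots_U q then trace_rel q (?d u) else 0)"
      unfolding c W_def by (rule ext) simp
    show "c \<in> trace_code q (code_C35 q)" unfolding trace_code_def
      by (rule CollectI, rule exI[where x="?d"]) (use d1 d2 in blast)
  qed
qed


lemma sq_add: "((x::'a) + y)^2 = x^2 + y^2"
  using frob2[OF two0, of x y 1] by simp

lemma add_self: "(z::'a) + z = 0"
  using eq_iff_add0[of z z] by simp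

lemma sqrt_ex: "\<exists>a::'a. a^2 = A"
proof -
  have "(A^(2^(2*m-1)))^2 = A^(2^(2*m-1)*2)" by (simp add: power_mult)
  also have "2^(2*m-1)*2 = (2::nat)^(2*m)"
  proof -
    have e: "2*m = Suc (2*m-1)" using m4 by simp
    show ?thesis by (subst (2) e) (simp only: power_Suc2)
  qed
  also have "(2::nat)^(2*m) = card (UNIV::'a set)" using cardq qm by (simp add: power_mult[symmetric] mult.commute)
  finally have "(A^(2^(2*m-1)))^2 = A" using fermat_all[of A] by simp
  then show ?thesis by blast
qed

lemma poly_rel:
  assumes u: "(u::'a) \<in> roots_U q" and "a^2 = A" "b^2 = B"
  shows "u^5 * trace_rel q (A*u^3 + B*u^5) = (b*u^5 + a*u^4 + a^q*u + b^q)^2"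
proof -
  have u0: "u \<noteq> 0" and uq: "u ^ q = inverse u" using U_inv[OF u] by auto
  have pq: "(u ^ k) ^ q = inverse u ^ k" for k
    using uq by (metis power_mult mult.commute)
  have "u^5 * trace_rel q (A*u^3 + B*u^5) = u^5 * (A*u^3 + B*u^5 + A^q * inverse u ^ 3 + B^q * inverse u ^ 5)"
    unfolding trace_rel_def by (simp add: frobq frob_mult pq algebra_simps)
  also have "\<dots> = A * u^8 + B * u^10 + A^q * u^2 + B^q" using u0
    by (simp add: field_simps power_inverse[symmetric] eval_nat_numeral)
  also have "\<dots> = (b*u^5)^2 + (a*u^4)^2 + (a^q*u)^2 + (b^q)^2"
  proof -
    have "(a^q)^2 = A^q" "(b^q)^2 = B^q" using assms(2,3) by (metis power_mult mult.commute)+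
    then show ?thesis using assms(2,3) by (simp add: power_mult_distrib power_mult[symmetric] algebra_simps)
  qed
  also have "\<dots> = (b*u^5 + a*u^4 + a^q*u + b^q)^2" by (simp only: sq_add)
  finally show ?thesis .
qed

lemma zero_bound:
  assumes "A \<noteq> 0 \<or> B \<noteq> (0::'a)"
  shows "card {u \<in> roots_U q. W A B u = 0} \<le> 5"
proof -
  obtain a where a: "a^2 = A" using sqrt_ex by blast
  obtain b where b: "b^2 = B" using sqrt_ex by blast
  define g where "g = [:b^q, a^q, 0, 0, a, b:]"
  have ab: "a \<noteq> 0 \<or> b \<noteq> 0" using assms a b by auto
  have "coeff g 4 = a" "coeff g 5 = b" unfolding g_def by (simp_all add: eval_nat_numeral)
  then have g0: "g \<noteq> 0" using ab by auto
  have dg: "degree g \<le> 5" unfolding g_def by (auto simp: degree_pCons_eq_if)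
  have pg: "poly g u = b*u^5 + a*u^4 + a^q*u + b^q" for u
    unfolding g_def by (simp add: algebra_simps eval_nat_numeral)
  have "{u \<in> roots_U q. W A B u = 0} \<subseteq> {u. poly g u = 0}"
  proof
    fix u assume "u \<in> {u \<in> roots_U q. W A B u = 0}"
    then have u: "u \<in> roots_U q" and "trace_rel q (A*u^3 + B*u^5) = 0" by (auto simp: W_def)
    then have "(poly g u)^2 = 0" using poly_rel[OF u a b] pg by simp
    then show "u \<in> {u. poly g u = 0}" by simp
  qed
  then have "card {u \<in> roots_U q. W A B u = 0} \<le> card {u. poly g u = 0}"
    by (rule card_mono[OF poly_roots_finite[OF g0]])
  also have "\<dots> \<le> degree g" by (rule card_poly_roots_bound[OF g0])
  finally show ?thesis using dg by simp
qed

lemma W_zero: "W 0 0 = (\<lambda>_. 0)"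
  using q16 by (auto simp: W_def trace_rel_def)

lemma W_add: "(\<lambda>i. W A B i + W A' B' i) = W (A + A') (B + B')"
  by (rule ext) (simp add: W_def trace_rel_def frobq algebra_simps)

lemma W_smult: assumes "k \<in> subfield_GF q" shows "(\<lambda>i. k * W A B i) = W (k * A) (k * B)"
  using assms by (auto intro!: ext simp: W_def trace_rel_def frobq frob_mult subfield_GF_def algebra_simps)

lemma trace_in: "trace_rel q (v::'a) \<in> subfield_GF q"
  by (simp add: trace_rel_def subfield_GF_def frobq frobqq add.commute)

lemma W_inj: assumes "W A B = W A' B'" shows "A = A' \<and> B = B'"
proof (rule ccontr)
  assume "\<not> (A = A' \<and> B = B')"
  then have ne: "A + A' \<noteq> 0 \<or> B + B' \<noteq> 0" using eq_iff_add0 by blast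
  have "W (A + A') (B + B') = (\<lambda>i. W A B i + W A B i)" using W_add[of A B A' B'] assms by simp
  also have "\<dots> = (\<lambda>_. 0)" by (simp add: add_self)
  finally have "{u \<in> roots_U q. W (A + A') (B + B') u = 0} = roots_U q" by auto
  then have "q + 1 \<le> 5" using zero_bound[OF ne] cardU by simp
  then show False using q16 by simp
qed


lemma sq1: "(r::'a)^2 = 1 \<Longrightarrow> r = 1"
proof -
  assume "r^2 = 1"
  then have "(r + 1)^2 = 0" using sq_add[of r 1] add_self[of 1] by simp
  then have "r + 1 = 0" by simp
  then show "r = 1" using eq_iff_add0 by blast
qed

lemma q_mod3: "\<exists>j. q = 3*j + 1 \<and> j \<ge> 5"
proof -
  have q4: "q = 4^(m div 2)" using qm evm by (metis dvd_mult_div_cancel power_mult numeral_Bit0_eq_double power2_eq_square[of 2, symmetric] mult_2)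
  have "4^(m div 2) mod 3 = (1::nat)"
    using power_mod[of "4::nat" 3 "m div 2"] by simp
  then have "q mod 3 = 1" using q4 by simp
  then obtain j where "q = 3*j + 1" using mod_div_mult_eq[of q 3] by (metis add.commute mult.commute)
  moreover then have "j \<ge> 5" using q16 by simp
  ultimately show ?thesis by blast
qed

lemma omega_ex: "\<exists>w::'a. w^2 + w + 1 = 0 \<and> w^q = w"
proof -
  obtain j where qj: "q = 3*j + 1" and j5: "j \<ge> 5" using q_mod3 by blast
  define N where "N = j * (q+1)"
  have N1: "N \<ge> 1" using j5 by (simp add: N_def)
  have cardA: "card (UNIV - {0::'a}) = 3 * N"
    using cardq by (simp add: card_Diff_subset N_def qj power2_eq_square algebra_simps)
  have "\<not> (UNIV - {0::'a}) \<subseteq> {z. z^N = 1}"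
  proof
    assume "(UNIV - {0::'a}) \<subseteq> {z. z^N = 1}"
    then have "card (UNIV - {0::'a}) \<le> card {z::'a. z^N = 1}" by (rule card_mono[rotated]) simp
    also have "\<dots> \<le> N" by (rule pow_eq_card[OF N1])
    finally show False using cardA N1 by simp
  qed
  then obtain z :: 'a where z0: "z \<noteq> 0" and zN: "z^N \<noteq> 1" by blast
  define w where "w = z^N"
  have "card (UNIV::'a set) - 1 = 3 * N" using cardA by (simp add: card_Diff_subset)
  then have w3: "w^3 = 1" using fermat_nz[OF z0] by (simp add: w_def power_mult[symmetric] mult.commute)
  have "(w - 1) * (w^2 + w + 1) = w^3 - 1" by (simp add: algebra_simps power2_eq_square power3_eq_cube)
  then have "(w - 1) * (w^2 + w + 1) = 0" using w3 by simp
  moreover have "w - 1 \<noteq> 0" using zN w_def by simp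
  ultimately have "w^2 + w + 1 = 0" by simp
  moreover have "w^q = w" using w3 qj by (simp add: power_add power_mult)
  ultimately show ?thesis by blast
qed

lemma exists_good: "\<exists>c \<in> subfield_GF q. card {u \<in> roots_U q. W (c^2) 1 u = (0::'a)} = 5"
proof -
  obtain j where qj: "q = 3*j + 1" and j5: "j \<ge> 5" using q_mod3 by blast
  obtain w :: 'a where w1: "w^2 + w + 1 = 0" and wq: "w^q = w" using omega_ex by blast
  have "\<not> roots_U q \<subseteq> {1::'a}"
  proof
    assume "roots_U q \<subseteq> {1::'a}"
    then have "card (roots_U q :: 'a set) \<le> 1" using card_mono[of "{1::'a}"] by fastforce
    then show False using cardU q16 by simp
  qed
  then obtain x :: 'a where xU: "x \<in> roots_U q" and x1: "x \<noteq> 1" by blast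
  have x0: "x \<noteq> 0" and xq: "x^q = inverse x" using U_inv[OF xU] by auto
  define D where "D = x^2 + x + 1"
  have D0: "D \<noteq> 0"
  proof
    assume "D = 0"
    have "x^3 - 1 = (x - 1) * D" by (simp add: D_def algebra_simps power2_eq_square power3_eq_cube)
    then have "x^3 = 1" using \<open>D = 0\<close> by simp
    moreover have "x^(q+1) = 1" using xU by (simp add: roots_U_def)
    ultimately have "x^2 = 1" using qj by (simp add: power_add power_mult power2_eq_square)
    then show False using sq1 x1 by blast
  qed
  define P where "P = w^2 * x^2 + w"
  define y where "y = P / D"
  have yD: "y * D = P" using D0 by (simp add: y_def)
  have xsq: "(x^2)^q = (inverse x)^2" using xq by (metis power_mult mult.commute)
  have Dq: "D^q = (inverse x)^2 + inverse x + 1"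
    unfolding D_def using q16 by (simp add: frobq xq xsq del: power_inverse)
  have Pq: "P^q = w^2 * (inverse x)^2 + w"
  proof -
    have "(w^2)^q = w^2" using wq by (metis power_mult mult.commute)
    then show ?thesis unfolding P_def using q16 by (simp add: frobq frob_mult wq xsq del: power_inverse)
  qed
  have yqD: "y^q * D^q = P^q" using yD by (metis power_mult_distrib)
  have "P * P^q - D * D^q = P * (w^2*(inverse x)^2 + w) - D*((inverse x)^2 + inverse x + 1)"
    using Dq Pq by simp
  also have "\<dots> = 0" unfolding P_def D_def
    using I2[of w x "inverse x"] two0 w1 x0 by simp
  finally have "P * P^q - D * D^q = 0" .
  then have "P * P^q = D * D^q" by simp
  moreover have "(y * y^q) * (D * D^q) = (y * D) * (y^q * D^q)" by (simp add: algebra_simps)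
  ultimately have "(y * y^q) * (D * D^q) = 1 * (D * D^q)" using yD yqD by simp
  then have yyq: "y * y^q = 1" using D0 by simp
  then have y0: "y \<noteq> 0" by auto
  have yq: "y^q = inverse y" using yyq by (metis inverse_unique)
  have yU: "y \<in> roots_U q" using yyq by (simp add: roots_U_def mult.commute)
  have ixU: "inverse x \<in> roots_U q" using xU unfolding roots_U_def by (simp only: mem_Collect_eq power_inverse inverse_1)
  have iyU: "inverse y \<in> roots_U q" using yU unfolding roots_U_def by (simp only: mem_Collect_eq power_inverse inverse_1)
  define s where "s = x + inverse x"
  define t where "t = y + inverse y"
  have s0: "s \<noteq> 0"
  proof
    assume "s = 0"
    then have "x = inverse x" using add0_iff[of x "inverse x"] s_def by simp
    then have "x^2 = 1" using x0 by (metis power2_eq_square right_inverse)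
    then show False using sq1 x1 by blast
  qed
  have st: "(s + 1) * (t + 1) = 1"
  proof -
    have "P^2 + D*P + D^2 - x*P = 0"
      unfolding P_def D_def using I1[of w x] two0 w1 by simp
    then have h1: "P^2 + D*P + D^2 = x*P" by simp
    have "D * (D * (y^2 + y + 1)) = (D*y)^2 + D*(D*y) + D^2" by (simp add: algebra_simps power2_eq_square)
    also have "\<dots> = x*P" using yD h1 by (simp add: mult.commute)
    also have "\<dots> = D * (x * y)" using yD by (simp add: algebra_simps)
    finally have "D * (D * (y^2 + y + 1)) = D * (x * y)" .
    then have e: "D * (y^2 + y + 1) = x * y" using D0 by simp
    have "s + 1 = D / x" using x0 by (simp add: s_def D_def field_simps power2_eq_square)
    moreover have "t + 1 = (y^2 + y + 1) / y" using y0 by (simp add: t_def field_simps power2_eq_square)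
    ultimately have "(s + 1) * (t + 1) = (D * (y^2 + y + 1)) / (x * y)" by simp
    then show ?thesis using e x0 y0 by simp
  qed
  have t0: "t \<noteq> 0"
  proof
    assume "t = 0" then have "s + 1 = 1" using st by simp
    then show False using s0 by simp
  qed
  have ts: "t \<noteq> s"
  proof
    assume "t = s" then have "(s + 1)^2 = 1" using st by (simp add: power2_eq_square)
    then have "s + 1 = 1" by (rule sq1)
    then show False using s0 by simp
  qed
  have n1: "y \<noteq> x" using ts by (auto simp: s_def t_def)
  have n2: "y \<noteq> inverse x" using ts by (auto simp: s_def t_def add.commute)
  have n3: "inverse y \<noteq> x" using n2 by auto
  have n4: "inverse y \<noteq> inverse x" using n1 by auto
  have n5: "y \<noteq> 1" using t0 add_self[of 1] by (auto simp: t_def)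
  have n6: "inverse y \<noteq> 1" using n5 by auto
  have n7: "y \<noteq> inverse y" using t0 add_self[of y] by (auto simp: t_def)
  have n8: "x \<noteq> inverse x" using s0 add_self[of x] by (auto simp: s_def)
  have n9: "inverse x \<noteq> 1" using x1 by auto
  define c where "c = s + t + 1"
  have iq: "(inverse z)^q = inverse (z^q)" for z :: 'a by (simp add: power_inverse)
  have cK: "c^q = c"
    unfolding c_def s_def t_def using q16 by (simp add: frobq iq xq yq add.commute add.left_commute)
  have fac: "u^5 + c*u^4 + c*u + 1 = (u+1)*(u+x)*(u+inverse x)*(u+y)*(u+inverse y)" for u
  proof -
    have e1: "(u+x)*(u+inverse x) = u^2 + s*u + 1" using x0 by (simp add: s_def algebra_simps power2_eq_square)
    have e2: "(u+y)*(u+inverse y) = u^2 + t*u + 1" using y0 by (simp add: t_def algebra_simps power2_eq_square)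
    have "(u+1)*(u^2 + s*u + 1)*(u^2 + t*u + 1) = u^5 + (s+t+1)*u^4 + (s+t+1)*u + 1 + (((s+1)*(t+1) - 1) + 2)*(u^3+u^2)"
      by (simp add: algebra_simps power2_eq_square power3_eq_cube eval_nat_numeral)
    then have big: "(u+1)*(u^2 + s*u + 1)*(u^2 + t*u + 1) = u^5 + c*u^4 + c*u + 1"
      using st two0 by (simp add: c_def)
    have "(u+1)*(u+x)*(u+inverse x)*(u+y)*(u+inverse y) = (u+1)*((u+x)*(u+inverse x))*((u+y)*(u+inverse y))"
      by (simp only: mult.assoc)
    then show ?thesis using e1 e2 big by simp
  qed
  have zs: "{u \<in> roots_U q. W (c^2) 1 u = 0} = {1, x, inverse x, y, inverse y}"
  proof -
    have "W (c^2) 1 u = 0 \<longleftrightarrow> u \<in> {1, x, inverse x, y, inverse y}" if u: "u \<in> roots_U q" for u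
    proof -
      have u0: "u \<noteq> 0" using U_inv[OF u] by simp
      have "u^5 * trace_rel q (c^2*u^3 + 1*u^5) = (1*u^5 + c*u^4 + c^q*u + 1^q)^2"
        by (rule poly_rel[OF u]) simp_all
      then have "u^5 * trace_rel q (c^2*u^3 + 1*u^5) = ((u+1)*(u+x)*(u+inverse x)*(u+y)*(u+inverse y))^2"
        using cK fac by simp
      then have "W (c^2) 1 u = 0 \<longleftrightarrow> (u+1)*(u+x)*(u+inverse x)*(u+y)*(u+inverse y) = 0"
        using u u0 by (auto simp: W_def)
      also have "\<dots> \<longleftrightarrow> u \<in> {1, x, inverse x, y, inverse y}"
        using add0_iff by simp
      finally show ?thesis .
    qed
    moreover have "{1, x, inverse x, y, inverse y} \<subseteq> roots_U q"
      using xU yU ixU iyU by (auto simp: roots_U_def)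
    ultimately show ?thesis by blast
  qed
  have "card {1, x, inverse x, y, inverse y} = 5"
    using n1 n2 n3 n4 n5 n6 n7 n8 n9 x1 by auto
  moreover have "c \<in> subfield_GF q" using cK by (simp add: subfield_GF_def)
  ultimately show ?thesis using zs by (intro bexI[of _ c]) simp_all
qed


lemma hw_eq: fixes c :: "'a \<Rightarrow> 'a" shows "hamming_weight (roots_U q) c = (q + 1) - card {u \<in> roots_U q. c u = (0::'a)}"
proof -
  have e: "{i \<in> roots_U q. c i \<noteq> 0} = roots_U q - {u \<in> roots_U q. c u = 0}" by auto
  have "card (roots_U q - {u \<in> roots_U q. c u = 0}) = card (roots_U q :: 'a set) - card {u \<in> roots_U q. c u = 0}"
    by (rule card_Diff_subset) auto
  then show ?thesis unfolding hamming_weight_def using e cardU by simp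
qed

lemma main: "linear_code_params (subfield_GF q :: 'a set) (roots_U q)
           (trace_code q (code_C35 q)) (q + 1) 4 (q - 4)"
proof -
  let ?C = "trace_code q (code_C35 q) :: ('a \<Rightarrow> 'a) set"
  have CE: "?C = {W A B | A B. True}" by (rule code_eq)
  have c1: "\<forall>c\<in>?C. \<forall>i. (i \<in> roots_U q \<longrightarrow> c i \<in> subfield_GF q) \<and> (i \<notin> roots_U q \<longrightarrow> c i = 0)"
    unfolding CE by (auto simp: W_def trace_in)
  have c2: "(\<lambda>_. 0) \<in> ?C" unfolding CE using W_zero by (metis (mono_tags, lifting) mem_Collect_eq)
  have c3: "\<forall>x\<in>?C. \<forall>y\<in>?C. (\<lambda>i. x i + y i) \<in> ?C"
    unfolding CE using W_add by blast
  have c4: "\<forall>a\<in>subfield_GF q. \<forall>x\<in>?C. (\<lambda>i. a * x i) \<in> ?C"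
    unfolding CE using W_smult by blast
  have CI: "?C = (\<lambda>(A, B). W A B) ` UNIV" unfolding CE by auto
  have inj: "inj (\<lambda>(A, B). W A B)" by (auto simp: inj_def dest: W_inj)
  have "card ?C = card (UNIV :: ('a \<times> 'a) set)" unfolding CI by (rule card_image[OF inj])
  also have "\<dots> = q^2 * q^2" using cardq by (simp add: UNIV_Times_UNIV[symmetric] card_cartesian_product del: UNIV_Times_UNIV)
  also have "\<dots> = card (subfield_GF q :: 'a set) ^ 4" using cardK by simp
  finally have c5: "card ?C = card (subfield_GF q :: 'a set) ^ 4" .
  let ?S = "{hamming_weight (roots_U q) c | c. c \<in> ?C \<and> c \<noteq> (\<lambda>_. 0)}"
  have fS: "finite ?S"
  proof -
    have "?S \<subseteq> hamming_weight (roots_U q) ` ?C" by auto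
    then show ?thesis by (rule finite_subset) simp
  qed
  have lb: "\<forall>h\<in>?S. q - 4 \<le> h"
  proof
    fix h assume "h \<in> ?S"
    then obtain c where c: "c \<in> ?C" "c \<noteq> (\<lambda>_. 0)" and h: "h = hamming_weight (roots_U q) c" by blast
    obtain A B where cw: "c = W A B" using c(1) CE by auto
    have "A \<noteq> 0 \<or> B \<noteq> 0" using c(2) cw W_zero by auto
    then have "card {u \<in> roots_U q. c u = 0} \<le> 5" using zero_bound cw by simp
    then show "q - 4 \<le> h" using h hw_eq[of c] by simp
  qed
  obtain c0 where c0K: "c0 \<in> subfield_GF q" and z5: "card {u \<in> roots_U q. W (c0^2) 1 u = (0::'a)} = 5"
    using exists_good by blast
  have inS: "q - 4 \<in> ?S"
  proof -
    have "W (c0^2) 1 \<in> ?C" unfolding CE by blast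
    moreover have "W (c0^2) 1 \<noteq> (\<lambda>_. 0)"
    proof
      assume "W (c0^2) 1 = (\<lambda>_. 0)"
      then have "{u \<in> roots_U q. W (c0^2) 1 u = (0::'a)} = roots_U q" by auto
      then show False using z5 cardU q16 by simp
    qed
    moreover have "hamming_weight (roots_U q) (W (c0^2) 1) = q - 4" using hw_eq[of "W (c0^2) 1"] z5 by simp
    ultimately show ?thesis by (metis (mono_tags, lifting) mem_Collect_eq)
  qed
  have c6: "q - 4 = Min ?S"
    using Min_eqI[OF fS] lb inS by (metis (no_types, lifting))
  show ?thesis unfolding linear_code_params_def
    using c1 c2 c3 c4 c5 c6 cardU by simp
qed

end

theorem theorem22:
  fixes m q :: nat
  assumes "card (UNIV :: 'a::{finite,field} set) = q ^ 2"
    and "q = 2 ^ m" and "m \<ge> 4" and "even m"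
  shows "linear_code_params (subfield_GF q :: 'a set) (roots_U q)
           (trace_code q (code_C35 q)) (q + 1) 4 (q - 4)"
  by (rule main[OF assms])

end
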